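(* Let $R>0$ and $\Theta=(\alpha,\rho_r,\rho_d,\rho_s,\rho_0,T)$ with $\alpha>1$, $\rho_r,\rho_d,\rho_s,\rho_0>0$, $T>1$, and set $\beta=\rho_d/\rho_r$, $\delta=\rho_s/\rho_r$, $\mu=\rho_0/\rho_r$, $K_{max}(\Theta)=\min\big(\frac T4,\frac1{3\mu},\frac{3\beta}{2\mu}\big)$. Suppose (A) $K_{max}(\Theta)>10$; (D.1) $\rho_r>\frac{\alpha}{2\delta}$; (D.2) $\rho_r>\frac{3\alpha}{4(1+\beta)^2R}\,g^2\!\big(\frac{4R}{3K_{max}(\Theta)}\big)$; (D.3) $\rho_r<\frac{\alpha}{(1+\beta)^2}\frac{g^2(R)}{R}$. Then $\frac38<\frac{\zeta'_{zf}(R,\Theta)}{\zeta'_{csi}(R,\Theta)}<1$.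
   Context: $g(x)=\sqrt{\frac{x}{2^x-1}}\big(2^x x\ln2-2^x+1\big)$, $x>0$. For reals $M>K$, $1\le K\le\tau<T$, let $$\gamma_u=\frac{K+\tau}{2\tau(M-K)}\Big(2^{\frac{R}{K(1-\tau/T)}}-1\Big)+\sqrt{\Big(\frac{K+\tau}{2\tau(M-K)}\Big(2^{\frac{R}{K(1-\tau/T)}}-1\Big)\Big)^2+\frac{2^{\frac{R}{K(1-\tau/T)}}-1}{\tau(M-K)}},$$ $$\frac{R}{\zeta_{zf}(M,K,\tau,R,\Theta)}=\alpha K\gamma_u+\rho_s+K\Big(\rho_d+\frac{8K^2\rho_0}{3T}\Big)+M\Big(\rho_r+2K\rho_0+\frac{4K^2\rho_0}{T}\Big).$$ $\zeta'_{zf}(R,\Theta)$ is the supremum of $\zeta_{zf}(M,K,\tau,R,\Theta)$ over real $(M,K,\tau)$ with $1\le K\le K_{max}(\Theta)$, $K\le\tau<T$, $M>K$. For real $M>K\ge1$, $$\frac{1}{\zeta_{csi}(M,K,R,\Theta)}=\frac1R\Big[\frac{\alpha K}{M-K}\big(2^{R/K}-1\big)+M\rho_r+K\rho_d+\rho_s\Big],$$ and $\zeta'_{csi}(R,\Theta)$ is the maximum of $\zeta_{csi}(M,K,R,\Theta)$ over real $(M,K)$ with $1\le K\le K_{max}(\Theta)$, $M>K$. *)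

theory Defs
  imports Complex_Main
begin

definition g :: "real \<Rightarrow> real" where
  "g x = sqrt (x / (2 powr x - 1)) * (2 powr x * x * ln 2 - 2 powr x + 1)"

definition Kmax :: "real \<Rightarrow> real \<Rightarrow> real \<Rightarrow> real \<Rightarrow> real \<Rightarrow> real \<Rightarrow> real" where
  "Kmax \<alpha> \<rho>r \<rho>d \<rho>s \<rho>0 T =
     (let \<beta> = \<rho>d / \<rho>r; \<mu> = \<rho>0 / \<rho>r in min (T / 4) (min (1 / (3 * \<mu>)) (3 * \<beta> / (2 * \<mu>))))"

definition gamma_u :: "real \<Rightarrow> real \<Rightarrow> real \<Rightarrow> real \<Rightarrow> real \<Rightarrow> real" where
  "gamma_u M K \<tau> R T =
     (let a = (K + \<tau>) / (2 * \<tau> * (M - K)) * (2 powr (R / (K * (1 - \<tau> / T))) - 1)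
      in a + sqrt (a\<^sup>2 + (2 powr (R / (K * (1 - \<tau> / T))) - 1) / (\<tau> * (M - K))))"

definition zeta_zf :: "real \<Rightarrow> real \<Rightarrow> real \<Rightarrow> real \<Rightarrow> real \<Rightarrow> real \<Rightarrow> real \<Rightarrow> real \<Rightarrow> real \<Rightarrow> real \<Rightarrow> real" where
  "zeta_zf M K \<tau> R \<alpha> \<rho>r \<rho>d \<rho>s \<rho>0 T =
     R / (\<alpha> * K * gamma_u M K \<tau> R T + \<rho>s + K * (\<rho>d + 8 * K\<^sup>2 * \<rho>0 / (3 * T))
          + M * (\<rho>r + 2 * K * \<rho>0 + 4 * K\<^sup>2 * \<rho>0 / T))"

definition zeta_zf' :: "real \<Rightarrow> real \<Rightarrow> real \<Rightarrow> real \<Rightarrow> real \<Rightarrow> real \<Rightarrow> real \<Rightarrow> real" where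
  "zeta_zf' R \<alpha> \<rho>r \<rho>d \<rho>s \<rho>0 T =
     Sup {zeta_zf M K \<tau> R \<alpha> \<rho>r \<rho>d \<rho>s \<rho>0 T | M K \<tau>.
            1 \<le> K \<and> K \<le> Kmax \<alpha> \<rho>r \<rho>d \<rho>s \<rho>0 T \<and> K \<le> \<tau> \<and> \<tau> < T \<and> K < M}"

definition zeta_csi :: "real \<Rightarrow> real \<Rightarrow> real \<Rightarrow> real \<Rightarrow> real \<Rightarrow> real \<Rightarrow> real \<Rightarrow> real" where
  "zeta_csi M K R \<alpha> \<rho>r \<rho>d \<rho>s =
     R / (\<alpha> * K / (M - K) * (2 powr (R / K) - 1) + M * \<rho>r + K * \<rho>d + \<rho>s)"

definition zeta_csi' :: "real \<Rightarrow> real \<Rightarrow> real \<Rightarrow> real \<Rightarrow> real \<Rightarrow> real \<Rightarrow> real \<Rightarrow> real" where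
  "zeta_csi' R \<alpha> \<rho>r \<rho>d \<rho>s \<rho>0 T =
     Sup {zeta_csi M K R \<alpha> \<rho>r \<rho>d \<rho>s | M K.
            1 \<le> K \<and> K \<le> Kmax \<alpha> \<rho>r \<rho>d \<rho>s \<rho>0 T \<and> K < M}"

end

theory Submission
  imports Defs
begin

lemma n_nonneg: fixes t::real assumes "t \<ge> 0" shows "t * exp t - exp t + 1 \<ge> 0"
proof -
  have "exp (-t) \<ge> 1 - t" using exp_ge_add_one_self[of "-t"] by simp
  hence "exp (-t) * exp t \<ge> (1 - t) * exp t" by (intro mult_right_mono) auto
  moreover have "exp (-t) * exp t = 1" by (simp add: exp_add[symmetric])
  ultimately have "1 \<ge> (1 - t) * exp t" by simp
  thus ?thesis by (simp add: algebra_simps)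
qed

lemma key_ineq: fixes t E :: real assumes "t \<ge> 0" "E \<ge> 1 + t" "t * E - E + 1 \<ge> 0"
  shows "(t * E - E + 1)^2 \<le> 2 * t^2 * E * (E - 1)"
proof -
  define n where "n = t * E - E + 1"
  have n0: "n \<ge> 0" using assms n_def by simp
  have "n \<le> t * E" using assms n_def by simp
  hence "n^2 \<le> t * E * n" using n0 by (simp add: power2_eq_square mult_right_mono)
  also have "n \<le> 2 * t * (E - 1)"
  proof -
    have "E * (1 + t) \<ge> (1+t)*(1+t)" using assms by (intro mult_right_mono) auto
    hence "1 + 2*t + t*t \<le> E + E*t" by (simp add: algebra_simps)
    moreover have "t * t \<ge> 0" by simp
    ultimately have "1 + 2*t \<le> E + E*t" by linarith
    thus ?thesis unfolding n_def by (simp add: algebra_simps power2_eq_square)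
  qed
  hence "t * E * n \<le> t * E * (2 * t * (E - 1))" using assms by (intro mult_left_mono) auto
  finally show ?thesis unfolding n_def by (simp add: power2_eq_square algebra_simps)
qed

definition q :: "real \<Rightarrow> real" where
  "q x = x * (exp (x*ln 2) * x * ln 2 - exp (x*ln 2) + 1)^2 / (exp (x*ln 2) - 1)"

lemma q_deriv: assumes "x > 0"
  shows "(q has_real_derivative 
    (((exp (x*ln 2) * x * ln 2 - exp (x*ln 2) + 1)^2 + 2*x*(exp (x*ln 2) * x * ln 2 - exp (x*ln 2) + 1)*(exp (x*ln 2)*x*(ln 2)^2))*(exp (x*ln 2) - 1)
     - x*(exp (x*ln 2) * x * ln 2 - exp (x*ln 2) + 1)^2*(exp (x*ln 2)*ln 2)) / (exp (x*ln 2) - 1)^2) (at x)"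
proof -
  have d: "exp (x*ln 2) - 1 \<noteq> 0" using assms by simp
  show ?thesis unfolding q_def
    apply (auto intro!: derivative_eq_intros simp: d)
    using assms apply simp
    by (simp add: power2_eq_square algebra_simps)
qed

lemma q_deriv_nonneg: fixes x :: real assumes "x > 0"
  shows "0 \<le> (((exp (x*ln 2) * x * ln 2 - exp (x*ln 2) + 1)^2 + 2*x*(exp (x*ln 2) * x * ln 2 - exp (x*ln 2) + 1)*(exp (x*ln 2)*x*(ln 2)^2))*(exp (x*ln 2) - 1)
     - x*(exp (x*ln 2) * x * ln 2 - exp (x*ln 2) + 1)^2*(exp (x*ln 2)*ln 2)) / (exp (x*ln 2) - 1)^2"
proof -
  define t where "t = x * ln 2"
  define E where "E = exp t"
  have t0: "t > 0" using assms t_def by simp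
  have E1: "E \<ge> 1 + t" unfolding E_def using exp_ge_add_one_self[of t] by simp
  have n0: "t * E - E + 1 \<ge> 0" unfolding E_def using n_nonneg t0 by simp
  have K: "(t * E - E + 1)^2 \<le> 2 * t^2 * E * (E - 1)" using key_ineq t0 E1 n0 by simp
  have eq: "((exp (x*ln 2) * x * ln 2 - exp (x*ln 2) + 1)^2 + 2*x*(exp (x*ln 2) * x * ln 2 - exp (x*ln 2) + 1)*(exp (x*ln 2)*x*(ln 2)^2))*(exp (x*ln 2) - 1)
     - x*(exp (x*ln 2) * x * ln 2 - exp (x*ln 2) + 1)^2*(exp (x*ln 2)*ln 2)
     = (t * E - E + 1) * (2 * t^2 * E * (E - 1) - (t * E - E + 1)^2)"
    unfolding t_def E_def by (simp add: power2_eq_square algebra_simps)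
  have "0 \<le> (t * E - E + 1) * (2 * t^2 * E * (E - 1) - (t * E - E + 1)^2)"
    using n0 K by simp
  thus ?thesis unfolding eq by simp
qed

lemma q_mono: assumes "0 < x" "x \<le> y" shows "q x \<le> q y"
  using assms(2)
proof (rule DERIV_nonneg_imp_nondecreasing)
  fix z assume "x \<le> z" "z \<le> y"
  hence z: "z > 0" using assms by simp
  show "\<exists>y. DERIV q z :> y \<and> 0 \<le> y" using q_deriv[OF z] q_deriv_nonneg[OF z] by blast
qed

lemma q_nonneg: assumes "x > 0" shows "q x \<ge> 0"
  unfolding q_def using assms by (intro divide_nonneg_pos mult_nonneg_nonneg) auto

lemma g_sqrt_q: assumes "x > 0" shows "g x = sqrt (q x)"
proof -
  have p: "2 powr x = exp (x * ln 2)" by (simp add: powr_def)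
  define n where "n = exp (x*ln 2) * x * ln 2 - exp (x*ln 2) + 1"
  have n0: "n \<ge> 0"
    using n_nonneg[of "x * ln 2"] assms unfolding n_def by (simp add: algebra_simps)
  have "g x = sqrt (x / (exp (x*ln 2) - 1)) * n"
    unfolding g_def p n_def by simp
  also have "n = sqrt (n^2)" using n0 by simp
  also have "sqrt (x / (exp (x*ln 2) - 1)) * sqrt (n^2) = sqrt (x / (exp (x*ln 2) - 1) * n^2)"
    by (rule real_sqrt_mult[symmetric])
  also have "x / (exp (x*ln 2) - 1) * n^2 = q x" unfolding q_def n_def by simp
  finally show ?thesis .
qed

lemma g_mono: assumes "0 < x" "x \<le> y" shows "g x \<le> g y"
  using g_sqrt_q q_mono assms by simp

lemma g_nonneg: assumes "0 < x" shows "g x \<ge> 0"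
  using g_sqrt_q q_nonneg assms by simp

lemma Phi_deriv_eq: fixes C z :: real assumes "C > 0" "z > 0"
  shows "inverse (sqrt (C * (exp (z * ln 2) - 1) / z)) * (exp (z * ln 2) * ln 2 * C * z - C * (exp (z * ln 2) - 1))
     = sqrt C * g z"
proof -
  define E where "E = exp (z * ln 2)"
  have E1: "E - 1 > 0" using assms unfolding E_def by simp
  have p: "2 powr z = E" by (simp add: powr_def E_def)
  have e1: "inverse (sqrt (C * (E - 1) / z)) = inverse (sqrt C) * sqrt (z / (E - 1))"
  proof -
    have a: "sqrt (C * (E - 1) / z) = sqrt C * sqrt (E - 1) / sqrt z" by (simp add: real_sqrt_mult real_sqrt_divide)
    have b: "sqrt (z/(E-1)) = sqrt z / sqrt (E-1)" by (simp add: real_sqrt_divide)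
    have "sqrt C > 0" "sqrt (E-1) > 0" "sqrt z > 0" using assms E1 by auto
    thus ?thesis unfolding a b by (simp add: field_simps)
  qed
  have e2: "E * ln 2 * C * z - C * (E - 1) = C * (E * z * ln 2 - E + 1)" by (simp add: algebra_simps)
  have e3: "inverse (sqrt C) * C = sqrt C"
  proof -
    have "C = sqrt C * sqrt C" using assms by simp
    hence "inverse (sqrt C) * C = (inverse (sqrt C) * sqrt C) * sqrt C" by (simp only: mult.assoc)
    thus ?thesis using assms by simp
  qed
  have "inverse (sqrt (C * (E - 1) / z)) * (E * ln 2 * C * z - C * (E - 1))
      = inverse (sqrt C) * sqrt (z / (E - 1)) * (C * (E * z * ln 2 - E + 1))" unfolding e1 e2 ..
  also have "\<dots> = (inverse (sqrt C) * C) * (sqrt (z / (E - 1)) * (E * z * ln 2 - E + 1))" by (simp only: mult_ac)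
  also have "\<dots> = sqrt C * (sqrt (z / (E - 1)) * (E * z * ln 2 - E + 1))" unfolding e3 ..
  also have "sqrt (z / (E - 1)) * (E * z * ln 2 - E + 1) = g z" unfolding g_def p by simp
  finally show ?thesis unfolding E_def .
qed

lemma Phi_mono: fixes C B x y :: real assumes "C > 0" "0 < x" "x \<le> y" "2 * sqrt C * g y \<le> B"
  shows "4*sqrt(C*((exp (y*ln 2)-1)/y)) + B/y \<le> 4*sqrt(C*((exp (x*ln 2)-1)/x)) + B/x"
  using assms(3)
proof (rule DERIV_nonpos_imp_nonincreasing[where f = "\<lambda>z. 4*sqrt(C*((exp (z*ln 2)-1)/z)) + B/z"])
  fix z assume z: "x \<le> z" "z \<le> y"
  hence z0: "z > 0" using assms by simp
  define D where "D = 2 * (inverse (sqrt (C * (exp (z * ln 2) - 1) / z)) *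
         (exp (z * ln 2) * ln 2 * C * z - C * (exp (z * ln 2) - 1))) / (z * z) - B / (z * z)"
  have "((\<lambda>z. 4*sqrt(C*((exp (z*ln 2)-1)/z)) + B/z) has_real_derivative D) (at z)"
  proof -
    have pos: "C*(exp (z*ln 2)-1)/z > 0" using assms(1) z0 by (intro divide_pos_pos mult_pos_pos) auto
    show ?thesis
    using assms(1) z0 unfolding D_def
    apply (auto intro!: derivative_eq_intros)
    using pos by linarith
  qed
  moreover have "D \<le> 0"
  proof -
    have "g z \<le> g y" using g_mono z0 z by simp
    hence "2 * sqrt C * g z \<le> B" using assms(4) using assms(1) by (smt (verit) mult_left_mono real_sqrt_ge_zero)
    hence "2 * (sqrt C * g z) - B \<le> 0" by simp
    hence "(2 * (sqrt C * g z) - B) / (z*z) \<le> 0" by (simp add: divide_nonpos_pos z0)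
    thus ?thesis unfolding D_def Phi_deriv_eq[OF assms(1) z0] by (simp add: diff_divide_distrib)
  qed
  ultimately show "\<exists>D. ((\<lambda>z. 4*sqrt(C*((exp (z*ln 2)-1)/z)) + B/z) has_real_derivative D) (at z) \<and> D \<le> 0" by blast
qed

lemma sqrt_bound: fixes a t :: real assumes "a > 0" "t \<ge> 0" shows "sqrt (a^2 + t) \<le> a + t/(2*a)"
proof -
  have "a^2 + t \<le> (a + t/(2*a))^2"
    using assms by (simp add: power2_eq_square field_simps)
  hence "sqrt (a^2 + t) \<le> sqrt ((a + t/(2*a))^2)" by (rule real_sqrt_le_mono)
  also have "\<dots> = a + t/(2*a)" using assms by simp
  finally show ?thesis .
qed

lemma gamma_bound: fixes k m R T :: real
  assumes "k > 0" "m > 0" "2 powr (R/(k*(1-k/T))) - 1 > 0"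
  shows "gamma_u (k+m) k k R T \<le> 2*(2 powr (R/(k*(1-k/T))) - 1)/m + 1/(2*k)"
proof -
  define b where "b = 2 powr (R/(k*(1-k/T))) - 1"
  have b0: "b > 0" using assms b_def by simp
  have a: "(k + k) / (2 * k * (k + m - k)) * b = b/m" using assms by (simp add: field_simps)
  have "gamma_u (k+m) k k R T = b/m + sqrt ((b/m)^2 + b / (k * m))"
    unfolding gamma_u_def Let_def b_def[symmetric] a by simp
  also have "sqrt ((b/m)^2 + b / (k * m)) \<le> b/m + (b/(k*m))/(2*(b/m))"
    using assms b0 by (intro sqrt_bound) auto
  also have "(b/(k*m))/(2*(b/m)) = 1/(2*k)" using assms b0 by (simp add: field_simps)
  finally show ?thesis unfolding b_def by simp
qed

lemma zf_point:
  fixes k R \<alpha> \<rho>r \<rho>d \<rho>s \<rho>0 T P m :: real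
  assumes k1: "1 \<le> k" and kT: "4*k \<le> T" and k0r: "3*k*\<rho>0 \<le> \<rho>r" and k0d: "2*k*\<rho>0 \<le> 3*\<rho>d"
    and pos: "R > 0" "\<alpha> > 0" "\<rho>r > 0" "\<rho>d > 0" "\<rho>s > 0" "\<rho>0 > 0"
    and as: "\<alpha> < 2*\<rho>s"
    and P_def: "P = \<alpha>*k*(2 powr (4*R/(3*k)) - 1)" and m_def: "m = sqrt (P/\<rho>r)"
  shows "m > 0" and "\<alpha>*k*gamma_u (k+m) k k R T + \<rho>s + k*(\<rho>d + 8*k^2*\<rho>0/(3*T))
      + (k+m)*(\<rho>r + 2*k*\<rho>0 + 4*k^2*\<rho>0/T) < 4*sqrt(\<rho>r*P) + 2*k*(\<rho>r+\<rho>d) + 2*\<rho>s"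
proof -
  have T0: "T > 0" using kT k1 by simp
  have P0: "P > 0" unfolding P_def using pos k1 by (intro mult_pos_pos) auto
  show m0: "m > 0" unfolding m_def using P0 pos by simp
  define b where "b = 2 powr (R/(k*(1-k/T))) - 1"
  have kk: "k*(1-k/T) \<ge> 3*k/4" using kT T0 k1 by (simp add: field_simps)
  have kk0: "k*(1-k/T) > 0" using kk k1 by linarith
  have "R/(k*(1-k/T)) > 0" using pos(1) kk0 by (rule divide_pos_pos)
  hence b0: "b > 0" unfolding b_def using gr_one_powr[of 2 "R/(k*(1-k/T))"] by linarith
  have bb: "b \<le> 2 powr (4*R/(3*k)) - 1"
  proof -
    have "R/(k*(1-k/T)) \<le> R/(3*k/4)" apply (rule divide_left_mono[OF kk]) using pos(1) apply simp by (rule mult_pos_pos[OF kk0]) (use k1 in simp)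
    also have "R/(3*k/4) = 4*R/(3*k)" by simp
    finally show ?thesis unfolding b_def by (simp add: powr_mono)
  qed
  have g1: "gamma_u (k+m) k k R T \<le> 2*b/m + 1/(2*k)"
    using gamma_bound[of k m R T] k1 m0 b0 unfolding b_def by simp
  have "\<alpha>*k*gamma_u (k+m) k k R T \<le> \<alpha>*k*(2*b/m + 1/(2*k))"
    using g1 pos k1 by (intro mult_left_mono) auto
  also have "\<dots> = 2*(\<alpha>*k*b)/m + \<alpha>/2" using k1 by (simp add: field_simps)
  also have "\<dots> \<le> 2*P/m + \<alpha>/2"
  proof -
    have "\<alpha>*k*b \<le> P" unfolding P_def using bb pos k1 by (intro mult_left_mono) auto
    thus ?thesis using m0 by (simp add: divide_right_mono)
  qed
  finally have G: "\<alpha>*k*gamma_u (k+m) k k R T \<le> 2*P/m + \<alpha>/2" .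
  have E1: "8*k^2*\<rho>0/(3*T) \<le> \<rho>d"
  proof -
    have "8*k^2*\<rho>0 = (4*k)*(2*k*\<rho>0)" by (simp add: power2_eq_square)
    also have "\<dots> \<le> T * (3*\<rho>d)" apply (rule mult_mono[OF kT k0d]) using k1 pos T0 by auto
    finally show ?thesis using T0 by (simp add: field_simps)
  qed
  have E2: "2*k*\<rho>0 + 4*k^2*\<rho>0/T \<le> \<rho>r"
  proof -
    have "4*k^2*\<rho>0 = (4*k)*(k*\<rho>0)" by (simp add: power2_eq_square)
    also have "\<dots> \<le> T*(k*\<rho>0)" using kT k1 pos by (intro mult_right_mono) auto
    finally have "4*k^2*\<rho>0/T \<le> k*\<rho>0" using T0 by (simp add: field_simps)
    thus ?thesis using k0r by simp
  qed
  have "k*(\<rho>d + 8*k^2*\<rho>0/(3*T)) \<le> k*(2*\<rho>d)" using E1 k1 by (intro mult_left_mono) auto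
  moreover have "(k+m)*(\<rho>r + 2*k*\<rho>0 + 4*k^2*\<rho>0/T) \<le> (k+m)*(2*\<rho>r)"
    using E2 k1 m0 by (intro mult_left_mono) auto
  moreover have "P/m = sqrt(\<rho>r*P)"
  proof -
    define X where "X = sqrt(\<rho>r*P)"
    have "P = sqrt (P/\<rho>r) * sqrt(\<rho>r*P)" using P0 pos
      by (simp add: real_sqrt_mult[symmetric])
    hence "P = m * X" unfolding m_def X_def .
    thus ?thesis unfolding X_def[symmetric] using m0 by simp
  qed
  moreover have "m*\<rho>r = sqrt(\<rho>r*P)"
  proof -
    have "m*\<rho>r = sqrt (P/\<rho>r) * sqrt (\<rho>r^2)" unfolding m_def using pos by simp
    also have "\<dots> = sqrt (P/\<rho>r * \<rho>r^2)" by (rule real_sqrt_mult[symmetric])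
    also have "\<dots> = sqrt(\<rho>r*P)"
    proof -
      have "P/\<rho>r * \<rho>r^2 = \<rho>r*P" using pos by (simp add: power2_eq_square)
      thus ?thesis by simp
    qed
    finally show ?thesis .
  qed
  ultimately show "\<alpha>*k*gamma_u (k+m) k k R T + \<rho>s + k*(\<rho>d + 8*k^2*\<rho>0/(3*T))
      + (k+m)*(\<rho>r + 2*k*\<rho>0 + 4*k^2*\<rho>0/T) < 4*sqrt(\<rho>r*P) + 2*k*(\<rho>r+\<rho>d) + 2*\<rho>s"
    using G as by (simp add: algebra_simps)
qed

lemma csi_lb:
  fixes M K R \<alpha> \<rho>r \<rho>d \<rho>s :: real
  assumes "1 \<le> K" "K < M" "R > 0" "\<alpha> > 0" "\<rho>r > 0" "\<rho>d > 0" "\<rho>s > 0"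
  shows "4*sqrt(\<rho>r*(\<alpha>*(4*K/3)*(2 powr (4*R/(3*(4*K/3))) - 1))) + 2*(4*K/3)*(\<rho>r+\<rho>d) + 2*\<rho>s
     \<le> 8/3*(\<alpha>*K/(M-K)*(2 powr (R/K) - 1) + M*\<rho>r + K*\<rho>d + \<rho>s) - 2/3*\<rho>s"
proof -
  define Q where "Q = \<alpha>*K*(2 powr (R/K) - 1)"
  have "2 powr (R/K) > 1" using assms by simp
  hence p1: "2 powr (R/K) - 1 \<ge> 0" by linarith
  have Q0: "Q \<ge> 0" unfolding Q_def
    by (rule mult_nonneg_nonneg[OF mult_nonneg_nonneg p1]) (use assms in auto)
  have e1: "4*R/(3*(4*K/3)) = R/K" using assms by simp
  have e2: "\<rho>r*(\<alpha>*(4*K/3)*(2 powr (R/K) - 1)) = (4/3)*(\<rho>r*Q)" unfolding Q_def by simp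
  have s43: "sqrt (4/3::real) \<le> 4/3"
  proof -
    have "sqrt (4/3::real) \<le> sqrt ((4/3)^2)" by (rule real_sqrt_le_mono) (simp add: power2_eq_square)
    thus ?thesis by simp
  qed
  have "sqrt((4/3)*(\<rho>r*Q)) = sqrt (4/3) * sqrt (\<rho>r*Q)" by (rule real_sqrt_mult)
  also have "\<dots> \<le> 4/3 * sqrt (\<rho>r*Q)" using s43 Q0 assms by (intro mult_right_mono) auto
  finally have S1: "sqrt((4/3)*(\<rho>r*Q)) \<le> 4/3 * sqrt (\<rho>r*Q)" .
  have "sqrt (\<rho>r*Q) = sqrt ((Q/(M-K)) * (\<rho>r*(M-K)))" using assms by simp
  also have "\<dots> \<le> (Q/(M-K) + \<rho>r*(M-K))/2" using Q0 assms by (intro arith_geo_mean_sqrt) auto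
  finally have S2: "2*sqrt (\<rho>r*Q) \<le> Q/(M-K) + \<rho>r*(M-K)" by simp
  have e3: "\<alpha>*K/(M-K)*(2 powr (R/K) - 1) = Q/(M-K)" unfolding Q_def by simp
  define s1 where "s1 = sqrt((4/3)*(\<rho>r*Q))"
  define s where "s = sqrt (\<rho>r*Q)"
  define X where "X = Q/(M-K)"
  have "4*s1 + 2*(4*K/3)*(\<rho>r+\<rho>d) + 2*\<rho>s \<le> 8/3*(X + M*\<rho>r + K*\<rho>d + \<rho>s) - 2/3*\<rho>s"
  proof -
    have a1: "4*s1 \<le> 16/3*s" using S1[folded s1_def s_def] by linarith
    have a2: "2*s \<le> X + M*\<rho>r - K*\<rho>r" using S2[folded s_def X_def] by (simp add: algebra_simps)
    have a3: "2*(4*K/3)*(\<rho>r+\<rho>d) = 8/3*(K*\<rho>r) + 8/3*(K*\<rho>d)" by (simp add: algebra_simps)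
    have a4: "8/3*(X + M*\<rho>r + K*\<rho>d + \<rho>s) = 8/3*X + 8/3*(M*\<rho>r) + 8/3*(K*\<rho>d) + 8/3*\<rho>s"
      by (simp add: algebra_simps)
    show ?thesis unfolding a3 a4 using a1 a2 by linarith
  qed
  thus ?thesis unfolding e1 e2 e3 s1_def s_def X_def .
qed

lemma F_mono:
  fixes k K0 R \<alpha> \<rho>r \<rho>d \<rho>s :: real
  assumes "1 \<le> K0" "K0 \<le> k" "R > 0" "\<alpha> > 0" "\<rho>r > 0" "\<rho>d > 0"
    and D2: "3*\<alpha>*\<rho>r*(g(4*R/(3*K0)))^2 \<le> 4*R*(\<rho>r+\<rho>d)^2"
  shows "4*sqrt(\<rho>r*(\<alpha>*K0*(2 powr (4*R/(3*K0)) - 1))) + 2*K0*(\<rho>r+\<rho>d) + 2*\<rho>s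
       \<le> 4*sqrt(\<rho>r*(\<alpha>*k*(2 powr (4*R/(3*k)) - 1))) + 2*k*(\<rho>r+\<rho>d) + 2*\<rho>s"
proof -
  define L where "L = \<rho>r + \<rho>d"
  define C where "C = 4*R*\<rho>r*\<alpha>/3"
  define B where "B = 8*R*L/3"
  define x where "x = 4*R/(3*k)"
  define y where "y = 4*R/(3*K0)"
  have C0: "C > 0" unfolding C_def using assms by simp
  have x0: "x > 0" unfolding x_def using assms by simp
  have y0: "y > 0" unfolding y_def using assms by simp
  have xy: "x \<le> y" unfolding x_def y_def using assms by (intro divide_left_mono) auto
  have gy: "g y \<ge> 0" using g_nonneg y0 by simp
  have CB: "2 * sqrt C * g y \<le> B"
  proof -
    have "C * (g y)^2 \<le> (B/2)^2"
    proof -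
      have "C * (g y)^2 = (4*R/9) * (3*\<alpha>*\<rho>r*(g y)^2)" unfolding C_def by simp
      also have "\<dots> \<le> (4*R/9) * (4*R*L^2)" using D2 assms unfolding y_def L_def
        by (intro mult_left_mono) auto
      also have "\<dots> = (B/2)^2" unfolding B_def by (simp add: power2_eq_square)
      finally show ?thesis .
    qed
    hence "sqrt (C * (g y)^2) \<le> sqrt ((B/2)^2)" by (rule real_sqrt_le_mono)
    moreover have "sqrt (C * (g y)^2) = sqrt C * g y" using gy by (simp add: real_sqrt_mult)
    moreover have "sqrt ((B/2)^2) = B/2" unfolding B_def L_def using assms by simp
    ultimately show ?thesis by simp
  qed
  have M: "4*sqrt(C*((exp (y*ln 2)-1)/y)) + B/y \<le> 4*sqrt(C*((exp (x*ln 2)-1)/x)) + B/x"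
    by (rule Phi_mono[OF C0 x0 xy CB])
  have ex: "exp (x*ln 2) = 2 powr x" "exp (y*ln 2) = 2 powr y" by (simp_all add: powr_def)
  have c1: "C*((2 powr x - 1)/x) = \<rho>r*(\<alpha>*k*(2 powr (4*R/(3*k)) - 1))"
    unfolding C_def x_def using assms by (simp add: field_simps)
  have c2: "C*((2 powr y - 1)/y) = \<rho>r*(\<alpha>*K0*(2 powr (4*R/(3*K0)) - 1))"
    unfolding C_def y_def using assms by (simp add: field_simps)
  have c3: "B/x = 2*k*(\<rho>r+\<rho>d)" unfolding B_def x_def L_def using assms by (simp add: field_simps)
  have c4: "B/y = 2*K0*(\<rho>r+\<rho>d)" unfolding B_def y_def L_def using assms by (simp add: field_simps)
  show ?thesis using M unfolding ex c1 c2 c3 c4 by simp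
qed

lemma zf_ge_csi:
  fixes M K \<tau> R \<alpha> \<rho>r \<rho>d \<rho>s \<rho>0 T :: real
  assumes K1: "1 \<le> K" and Kt: "K \<le> \<tau>" and tT: "\<tau> < T" and KM: "K < M"
    and pos: "R > 0" "\<alpha> > 0" "\<rho>r > 0" "\<rho>d > 0" "\<rho>s > 0" "\<rho>0 > 0"
  shows "(\<alpha>*K/(M-K)*(2 powr (R/K) - 1) + M*\<rho>r + K*\<rho>d + \<rho>s) + 2*\<rho>0 \<le>
     \<alpha>*K*gamma_u M K \<tau> R T + \<rho>s + K*(\<rho>d + 8*K^2*\<rho>0/(3*T)) + M*(\<rho>r + 2*K*\<rho>0 + 4*K^2*\<rho>0/T)"
proof -
  have T0: "T > 0" using K1 Kt tT by simp
  have t0: "\<tau> > 0" using K1 Kt by simp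
  have mk: "M - K > 0" using KM by simp
  have f1: "1 - \<tau>/T > 0" using tT T0 by (simp add: field_simps)
  have f2: "1 - \<tau>/T \<le> 1" using t0 T0 by simp
  have kf: "K*(1-\<tau>/T) \<le> K" using f2 K1 by (simp add: mult_left_le)
  have kf0: "K*(1-\<tau>/T) > 0" using f1 K1 by simp
  have "R/K \<le> R/(K*(1-\<tau>/T))" using pos(1) kf kf0 K1
    by (intro divide_left_mono) auto
  hence bb: "2 powr (R/K) - 1 \<le> 2 powr (R/(K*(1-\<tau>/T))) - 1" by (simp add: powr_mono)
  define b0 where "b0 = 2 powr (R/K) - 1"
  define b where "b = 2 powr (R/(K*(1-\<tau>/T))) - 1"
  have "2 powr (R/K) > 1" using pos K1 by simp
  hence b00: "b0 \<ge> 0" unfolding b0_def by linarith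
  have bb': "b0 \<le> b" using bb unfolding b0_def b_def .
  define a where "a = (K + \<tau>) / (2 * \<tau> * (M - K)) * b"
  have a0: "a \<ge> 0" unfolding a_def using b00 bb' t0 mk K1 by simp
  have tt: "b / (\<tau> * (M - K)) \<ge> 0" using b00 bb' t0 mk by simp
  have "gamma_u M K \<tau> R T = a + sqrt (a^2 + b / (\<tau> * (M - K)))"
    unfolding gamma_u_def Let_def a_def b_def by simp
  also have "sqrt (a^2 + b / (\<tau> * (M - K))) \<ge> sqrt (a^2)" using tt by (intro real_sqrt_le_mono) simp
  hence "a + sqrt (a^2 + b / (\<tau> * (M - K))) \<ge> 2*a" using a0 by simp
  finally have g2: "gamma_u M K \<tau> R T \<ge> 2*a" .
  have "2*a = (K+\<tau>)/\<tau> * (b/(M-K))" unfolding a_def using t0 mk by (simp add: field_simps)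
  also have "\<dots> \<ge> 1 * (b/(M-K))" using K1 t0 b00 bb' mk by (intro mult_right_mono) (auto simp: field_simps)
  finally have "2*a \<ge> b/(M-K)" by simp
  moreover have "b/(M-K) \<ge> b0/(M-K)" using bb' mk by (simp add: divide_right_mono)
  ultimately have "gamma_u M K \<tau> R T \<ge> b0/(M-K)" using g2 by linarith
  hence G: "\<alpha>*K*gamma_u M K \<tau> R T \<ge> \<alpha>*K*(b0/(M-K))" using pos K1 by (intro mult_left_mono) auto
  have H1: "K*(8*K^2*\<rho>0/(3*T)) \<ge> 0" using K1 pos T0 by simp
  have H2: "M*(2*K*\<rho>0 + 4*K^2*\<rho>0/T) \<ge> 2*\<rho>0"
  proof -
    have "1*1 \<le> M*K" using K1 KM by (intro mult_mono) auto
    hence "2*\<rho>0*1 \<le> 2*\<rho>0*(M*K)" using pos by (intro mult_left_mono) auto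
    moreover have "M*(4*K^2*\<rho>0/T) \<ge> 0" using pos T0 K1 KM by simp
    moreover have "M*(2*K*\<rho>0 + 4*K^2*\<rho>0/T) = 2*\<rho>0*(M*K) + M*(4*K^2*\<rho>0/T)"
      by (simp add: algebra_simps)
    ultimately show ?thesis by linarith
  qed
  have e: "\<alpha>*K/(M-K)*(2 powr (R/K) - 1) = \<alpha>*K*(b0/(M-K))" unfolding b0_def by simp
  show ?thesis unfolding e using G H1 H2 by (simp add: algebra_simps)
qed

theorem theorem4:
  fixes R \<alpha> \<rho>r \<rho>d \<rho>s \<rho>0 T :: real
  assumes "R > 0" and "\<alpha> > 1" and "\<rho>r > 0" and "\<rho>d > 0" and "\<rho>s > 0" and "\<rho>0 > 0" and "T > 1"
    and A: "Kmax \<alpha> \<rho>r \<rho>d \<rho>s \<rho>0 T > 10"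
    and D1: "\<rho>r > \<alpha> / (2 * (\<rho>s / \<rho>r))"
    and D2: "\<rho>r > 3 * \<alpha> / (4 * (1 + \<rho>d / \<rho>r)\<^sup>2 * R)
                  * (g (4 * R / (3 * Kmax \<alpha> \<rho>r \<rho>d \<rho>s \<rho>0 T)))\<^sup>2"
    and D3: "\<rho>r < \<alpha> / (1 + \<rho>d / \<rho>r)\<^sup>2 * (g R)\<^sup>2 / R"
  shows "3 / 8 < zeta_zf' R \<alpha> \<rho>r \<rho>d \<rho>s \<rho>0 T / zeta_csi' R \<alpha> \<rho>r \<rho>d \<rho>s \<rho>0 T
       \<and> zeta_zf' R \<alpha> \<rho>r \<rho>d \<rho>s \<rho>0 T / zeta_csi' R \<alpha> \<rho>r \<rho>d \<rho>s \<rho>0 T < 1"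
proof -
  note pos = assms(1-7)
  have a0: "\<alpha> > 0" using pos by simp
  define Km where "Km = Kmax \<alpha> \<rho>r \<rho>d \<rho>s \<rho>0 T"
  have Km10: "Km > 10" using A Km_def by simp
  have Kmin: "Km = min (T / 4) (min (1 / (3 * (\<rho>0/\<rho>r))) (3 * (\<rho>d/\<rho>r) / (2 * (\<rho>0/\<rho>r))))"
    unfolding Km_def Kmax_def Let_def ..
  have KT: "4*Km \<le> T" using Kmin by simp
  have Kr: "3*Km*\<rho>0 \<le> \<rho>r"
  proof -
    have "Km \<le> 1 / (3 * (\<rho>0/\<rho>r))" using Kmin by simp
    also have "\<dots> = \<rho>r/(3*\<rho>0)" using pos by (simp add: field_simps)
    finally show ?thesis using pos by (simp add: field_simps)
  qed
  have Kd: "2*Km*\<rho>0 \<le> 3*\<rho>d"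
  proof -
    have "Km \<le> 3 * (\<rho>d/\<rho>r) / (2 * (\<rho>0/\<rho>r))" using Kmin by simp
    also have "\<dots> = 3*\<rho>d/(2*\<rho>0)" using pos by (simp add: field_simps)
    finally show ?thesis using pos by (simp add: field_simps)
  qed
  have as: "\<alpha> < 2*\<rho>s"
  proof -
    have "\<alpha> / (2 * (\<rho>s / \<rho>r)) = \<alpha>*\<rho>r/(2*\<rho>s)" using pos by (simp add: field_simps)
    hence "\<alpha>*\<rho>r/(2*\<rho>s) < \<rho>r" using D1 by simp
    hence "\<alpha>*\<rho>r < \<rho>r*(2*\<rho>s)" using pos by (simp add: field_simps)
    thus ?thesis using pos by (simp add: mult.commute)
  qed
  have D2': "3*\<alpha>*\<rho>r*(g(4*R/(3*Km)))^2 \<le> 4*R*(\<rho>r+\<rho>d)^2"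
  proof -
    define G where "G = (g(4*R/(3*Km)))^2"
    have "(1 + \<rho>d / \<rho>r)^2 = (\<rho>r+\<rho>d)^2/\<rho>r^2" using pos by (simp add: field_simps power2_eq_square)
    hence "\<rho>r > 3 * \<alpha> / (4 * ((\<rho>r+\<rho>d)^2/\<rho>r^2) * R) * G" using D2 unfolding G_def Km_def by simp
    hence "\<rho>r > 3 * \<alpha> * \<rho>r^2 * G / (4 * (\<rho>r+\<rho>d)^2 * R)" using pos by (simp add: field_simps)
    hence "\<rho>r * (4 * (\<rho>r+\<rho>d)^2 * R) > 3 * \<alpha> * \<rho>r^2 * G" using pos by (simp add: field_simps)
    hence "\<rho>r * (4 * (\<rho>r+\<rho>d)^2 * R) > \<rho>r * (3 * \<alpha> * \<rho>r * G)" by (simp add: power2_eq_square algebra_simps)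
    hence "4 * (\<rho>r+\<rho>d)^2 * R > 3 * \<alpha> * \<rho>r * G" using pos by simp
    thus ?thesis unfolding G_def by (simp add: algebra_simps)
  qed
  define F where "F = (\<lambda>k. 4*sqrt(\<rho>r*(\<alpha>*k*(2 powr (4*R/(3*k)) - 1))) + 2*k*(\<rho>r+\<rho>d) + 2*\<rho>s)"
  define Dc where "Dc = (\<lambda>M K. \<alpha>*K/(M-K)*(2 powr (R/K) - 1) + M*\<rho>r + K*\<rho>d + \<rho>s)"
  define Dz where "Dz = (\<lambda>M K \<tau>. \<alpha>*K*gamma_u M K \<tau> R T + \<rho>s + K*(\<rho>d + 8*K^2*\<rho>0/(3*T))
          + M*(\<rho>r + 2*K*\<rho>0 + 4*K^2*\<rho>0/T))"
  define SZ where "SZ = {zeta_zf M K \<tau> R \<alpha> \<rho>r \<rho>d \<rho>s \<rho>0 T | M K \<tau>.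
            1 \<le> K \<and> K \<le> Km \<and> K \<le> \<tau> \<and> \<tau> < T \<and> K < M}"
  define SC where "SC = {zeta_csi M K R \<alpha> \<rho>r \<rho>d \<rho>s | M K.
            1 \<le> K \<and> K \<le> Km \<and> K < M}"
  have zdef: "zeta_zf' R \<alpha> \<rho>r \<rho>d \<rho>s \<rho>0 T = Sup SZ" unfolding zeta_zf'_def SZ_def Km_def ..
  have cdef: "zeta_csi' R \<alpha> \<rho>r \<rho>d \<rho>s \<rho>0 T = Sup SC" unfolding zeta_csi'_def SC_def Km_def ..
  have zeq: "zeta_zf M K \<tau> R \<alpha> \<rho>r \<rho>d \<rho>s \<rho>0 T = R / Dz M K \<tau>" for M K \<tau>
    unfolding zeta_zf_def Dz_def ..
  have ceq: "zeta_csi M K R \<alpha> \<rho>r \<rho>d \<rho>s = R / Dc M K" for M K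
    unfolding zeta_csi_def Dc_def ..
  have Dc_ge: "Dc M K \<ge> M*\<rho>r" if "1 \<le> K" "K < M" for M K
  proof -
    have "2 powr (R/K) > 1" using pos that by simp
    hence "\<alpha>*K/(M-K)*(2 powr (R/K) - 1) \<ge> 0" using that a0 by simp
    thus ?thesis unfolding Dc_def using that pos by simp
  qed
  have Dz_ge: "Dz M K \<tau> \<ge> Dc M K + 2*\<rho>0" if "1 \<le> K" "K \<le> \<tau>" "\<tau> < T" "K < M" for M K \<tau>
    unfolding Dz_def Dc_def using zf_ge_csi[OF that pos(1) a0 pos(3-6)] by simp
  have SC_bdd: "bdd_above SC"
  proof (rule bdd_aboveI)
    fix x assume "x \<in> SC"
    then obtain M K where x: "x = R / Dc M K" "1 \<le> K" "K < M" unfolding SC_def ceq by auto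
    have "Dc M K \<ge> \<rho>r" using Dc_ge[OF x(2,3)] x pos by (smt (verit) mult_le_cancel_right1)
    thus "x \<le> R/\<rho>r" using x pos by (simp add: divide_left_mono)
  qed
  have SZ_bdd: "bdd_above SZ"
  proof (rule bdd_aboveI)
    fix x assume "x \<in> SZ"
    then obtain M K \<tau> where x: "x = R / Dz M K \<tau>" "1 \<le> K" "K \<le> \<tau>" "\<tau> < T" "K < M"
      unfolding SZ_def zeq by auto
    have "Dz M K \<tau> \<ge> \<rho>r" using Dz_ge[OF x(2-5)] Dc_ge[OF x(2) x(5)] x pos
      by (smt (verit) mult_le_cancel_right1)
    thus "x \<le> R/\<rho>r" using x pos by (simp add: divide_left_mono)
  qed
  have SC_ne: "zeta_csi 2 1 R \<alpha> \<rho>r \<rho>d \<rho>s \<in> SC" unfolding SC_def using Km10 by force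
  define c where "c = Sup SC"
  define z where "z = Sup SZ"
  have c_pos: "c > 0"
  proof -
    have "Dc 2 1 \<ge> 2*\<rho>r" using Dc_ge[of 1 2] by simp
    hence "zeta_csi 2 1 R \<alpha> \<rho>r \<rho>d \<rho>s > 0" unfolding ceq using pos by simp
    moreover have "zeta_csi 2 1 R \<alpha> \<rho>r \<rho>d \<rho>s \<le> c" unfolding c_def
      by (rule cSup_upper[OF SC_ne SC_bdd])
    ultimately show ?thesis by simp
  qed
  have zF: "R / F k \<le> z \<and> F k > 0" if k: "1 \<le> k" "k \<le> Km" for k
  proof -
    define P where "P = \<alpha>*k*(2 powr (4*R/(3*k)) - 1)"
    define m where "m = sqrt (P/\<rho>r)"
    have kT: "4*k \<le> T" using KT k by simp
    have k0r: "3*k*\<rho>0 \<le> \<rho>r" using Kr k pos by (smt (verit) mult_right_mono mult_left_mono)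
    have k0d: "2*k*\<rho>0 \<le> 3*\<rho>d" using Kd k pos by (smt (verit) mult_right_mono mult_left_mono)
    note zp = zf_point[OF k(1) kT k0r k0d pos(1) a0 pos(3-6) as P_def m_def]
    have lt: "Dz (k+m) k k < F k" using zp(2) unfolding Dz_def F_def P_def by simp
    have Dzp: "Dz (k+m) k k > 0"
      using Dz_ge[of k k "k+m"] Dc_ge[of k "k+m"] k zp(1) kT pos
      by (smt (verit) mult_pos_pos)
    have mem: "R / Dz (k+m) k k \<in> SZ" unfolding SZ_def zeq[symmetric] using k zp(1) kT pos by force
    have "R / F k \<le> R / Dz (k+m) k k" using lt Dzp pos by (intro divide_left_mono) auto
    also have "\<dots> \<le> z" unfolding z_def by (rule cSup_upper[OF mem SZ_bdd])
    finally show ?thesis using lt Dzp by simp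
  qed
  have z_pos: "z > 0"
  proof -
    have "R / F 1 \<le> z" "F 1 > 0" using zF[of 1] Km10 by auto
    thus ?thesis using pos by (smt (verit) divide_pos_pos)
  qed
  have zc: "z < c"
  proof -
    have "z \<le> R / (R/c + 2*\<rho>0)" unfolding z_def
    proof (rule cSup_least)
      have "zeta_zf 2 1 1 R \<alpha> \<rho>r \<rho>d \<rho>s \<rho>0 T \<in> SZ" unfolding SZ_def using Km10 pos by force
      thus "SZ \<noteq> {}" by auto
    next
      fix x assume "x \<in> SZ"
      then obtain M K \<tau> where x: "x = R / Dz M K \<tau>" "1 \<le> K" "K \<le> Km" "K \<le> \<tau>" "\<tau> < T" "K < M"
        unfolding SZ_def zeq by auto
      have mem: "R / Dc M K \<in> SC" unfolding SC_def ceq[symmetric] using x by force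
      have "R / Dc M K \<le> c" unfolding c_def by (rule cSup_upper[OF mem SC_bdd])
      moreover have Dcp: "Dc M K > 0" using Dc_ge[OF x(2) x(6)] x pos by (smt (verit) mult_pos_pos)
      ultimately have "R/c \<le> Dc M K" using c_pos pos by (simp add: field_simps)
      hence "R/c + 2*\<rho>0 \<le> Dz M K \<tau>" using Dz_ge[OF x(2,4,5,6)] by simp
      moreover have "R/c + 2*\<rho>0 > 0"
      proof -
        have "R/c > 0" using c_pos pos by simp
        thus ?thesis using pos by linarith
      qed
      ultimately show "x \<le> R / (R/c + 2*\<rho>0)" unfolding x(1) using pos by (intro divide_left_mono) auto
    qed
    also have "\<dots> < c"
    proof -
      have "R/c > 0" using c_pos pos by simp
      hence d0: "R/c + 2*\<rho>0 > 0" using pos by linarith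
      have e: "c * (R/c + 2*\<rho>0) = R + 2*\<rho>0*c" using c_pos by (simp add: field_simps)
      have "R < c * (R/c + 2*\<rho>0)" unfolding e using c_pos pos by simp
      thus ?thesis by (simp add: pos_divide_less_eq[OF d0])
    qed
    finally show ?thesis .
  qed
  have cz: "c < 8/3 * z"
  proof -
    define Bd where "Bd = R / (3/8 * (R/z) + \<rho>s/4)"
    have "c \<le> Bd" unfolding c_def
    proof (rule cSup_least)
      show "SC \<noteq> {}" using SC_ne by auto
    next
      fix x assume "x \<in> SC"
      then obtain M K where x: "x = R / Dc M K" "1 \<le> K" "K \<le> Km" "K < M"
        unfolding SC_def ceq by auto
      have Fk: "\<exists>k. 1 \<le> k \<and> k \<le> Km \<and> F k \<le> 8/3 * Dc M K - 2/3*\<rho>s"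
      proof -
        have C1: "F (4*K/3) \<le> 8/3 * Dc M K - 2/3*\<rho>s"
          using csi_lb[OF x(2) x(4) pos(1) a0 pos(3-5)] unfolding F_def Dc_def by simp
        show ?thesis
        proof (cases "4*K/3 \<le> Km")
          case True thus ?thesis using C1 x by (intro exI[of _ "4*K/3"]) auto
        next
          case False
          have "F Km \<le> F (4*K/3)" unfolding F_def
            by (rule F_mono) (use False Km10 pos D2' in auto)
          thus ?thesis using C1 Km10 by (intro exI[of _ Km]) auto
        qed
      qed
      then obtain k where k: "1 \<le> k" "k \<le> Km" "F k \<le> 8/3 * Dc M K - 2/3*\<rho>s" by blast
      have "R / F k \<le> z" "F k > 0" using zF[OF k(1,2)] by auto
      hence "R / z \<le> F k" using z_pos pos by (simp add: field_simps)
      hence "3/8 * (R/z) + \<rho>s/4 \<le> Dc M K" using k(3) by simp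
      moreover have "3/8 * (R/z) + \<rho>s/4 > 0"
      proof -
        have "R/z > 0" using z_pos pos by simp
        thus ?thesis using pos by linarith
      qed
      ultimately show "x \<le> Bd" unfolding x(1) Bd_def using pos by (intro divide_left_mono) auto
    qed
    also have "Bd < 8/3 * z"
    proof -
      have "R/z > 0" using z_pos pos by simp
      hence d0: "3/8 * (R/z) + \<rho>s/4 > 0" using pos by linarith
      have e: "8/3 * z * (3/8 * (R/z) + \<rho>s/4) = R + 2/3*z*\<rho>s" using z_pos by (simp add: field_simps)
      have "R < 8/3 * z * (3/8 * (R/z) + \<rho>s/4)" unfolding e using z_pos pos by simp
      thus ?thesis unfolding Bd_def by (rule iffD2[OF pos_divide_less_eq[OF d0]])
    qed
    finally show ?thesis .
  qed
  show ?thesis unfolding zdef cdef z_def[symmetric] c_def[symmetric]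
    using zc cz c_pos by (simp add: field_simps)
qed

end
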